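(* Let $G=(V,E)$ be an $n$-node $d$-dimensional $\alpha$-quasi unit ball graph. Let $G_0=(V,E_0)$ be its spanning subgraph with $E_0=\{\{u,v\}\in E: |uv|\le \alpha/n\}$. Then the vertex set of every connected component of $G_0$ induces a clique in $G$.
   Context: A $d$-dimensional $\alpha$-quasi unit ball graph, for $0<\alpha\le1$, is a graph whose vertices correspond one-to-one to points of $\mathbb{R}^d$. Writing $|uv|$ for the Euclidean distance between the points of $u$ and $v$, it satisfies: $|uv|\le\alpha$ implies $\{u,v\}$ is an edge, and $|uv|>1$ implies $\{u,v\}$ is not an edge. *)

theory Defs
  imports "HOL-Analysis.Analysis"
begin

text \<open>A graph with vertex set V and edge set E (edges are 2-element sets of vertices),
  whose vertices are placed injectively at points p of R^d (d = CARD('d)).\<close>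

definition quasi_unit_ball_graph ::
  "real \<Rightarrow> 'v set \<Rightarrow> 'v set set \<Rightarrow> ('v \<Rightarrow> real^'d) \<Rightarrow> bool" where
  "quasi_unit_ball_graph \<alpha> V E p \<longleftrightarrow>
     0 < \<alpha> \<and> \<alpha> \<le> 1 \<and>
     inj_on p V \<and>
     E \<subseteq> {{u, v} | u v. u \<in> V \<and> v \<in> V \<and> u \<noteq> v} \<and>
     (\<forall>u\<in>V. \<forall>v\<in>V. u \<noteq> v \<longrightarrow> dist (p u) (p v) \<le> \<alpha> \<longrightarrow> {u, v} \<in> E) \<and>
     (\<forall>u\<in>V. \<forall>v\<in>V. u \<noteq> v \<longrightarrow> dist (p u) (p v) > 1 \<longrightarrow> {u, v} \<notin> E)"

definition adj :: "'v set \<Rightarrow> 'v set set \<Rightarrow> 'v \<Rightarrow> 'v \<Rightarrow> bool" where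
  "adj V E u v \<longleftrightarrow> u \<in> V \<and> v \<in> V \<and> {u, v} \<in> E"

definition component :: "'v set \<Rightarrow> 'v set set \<Rightarrow> 'v \<Rightarrow> 'v set" where
  "component V E u = {v \<in> V. (adj V E)\<^sup>*\<^sup>* u v}"

definition is_clique :: "'v set set \<Rightarrow> 'v set \<Rightarrow> bool" where
  "is_clique E C \<longleftrightarrow> (\<forall>x\<in>C. \<forall>y\<in>C. x \<noteq> y \<longrightarrow> {x, y} \<in> E)"

end

theory Submission
  imports Defs
begin

lemma adj_sym: "adj V E a b \<Longrightarrow> adj V E b a"
  unfolding adj_def by (auto simp: insert_commute)

lemma rt_sym: "(adj V E)\<^sup>*\<^sup>* a b \<Longrightarrow> (adj V E)\<^sup>*\<^sup>* b a"
proof (induction rule: rtranclp_induct)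
  case base then show ?case by simp
next
  case (step y z)
  then show ?case using adj_sym
    by (metis converse_rtranclp_into_rtranclp)
qed

lemma crossing:
  assumes "R\<^sup>*\<^sup>* u v" "u \<in> A" "v \<notin> A"
  shows "\<exists>a b. a \<in> A \<and> b \<notin> A \<and> R a b \<and> R\<^sup>*\<^sup>* u b"
  using assms
proof (induction rule: rtranclp_induct)
  case base then show ?case by simp
next
  case (step y z)
  show ?case
  proof (cases "y \<in> A")
    case True
    have "R\<^sup>*\<^sup>* u z" using step.hyps by (rule rtranclp.rtrancl_into_rtrancl)
    then show ?thesis using True step.hyps(2) step.prems(2) by (intro exI[of _ y] exI[of _ z]) simp
  next
    case False then show ?thesis using step.IH step.prems(1) by simp
  qed
qed

lemma main_bound:
  fixes p :: "'v \<Rightarrow> real^'d" and d :: real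
  assumes fin: "finite V" and xV: "x \<in> V"
    and edge: "\<And>a b. adj V E0 a b \<Longrightarrow> dist (p a) (p b) \<le> d" and dnn: "d \<ge> 0"
  defines "C \<equiv> component V E0 x"
  shows "min (k+1) (card C) \<le> card {v\<in>C. dist (p x) (p v) \<le> real k * d}"
proof (induction k)
  have "x \<in> C" using xV unfolding C_def component_def by simp
  then have "x \<in> {v\<in>C. dist (p x) (p v) \<le> real 0 * d}" by simp
  moreover have "finite C" using fin unfolding C_def component_def by simp
  ultimately have "card {x} \<le> card {v\<in>C. dist (p x) (p v) \<le> real 0 * d}"
    by (intro card_mono) auto
  then have "1 \<le> card {v\<in>C. dist (p x) (p v) \<le> real 0 * d}" by simp
  then show "min (0+1) (card C) \<le> card {v\<in>C. dist (p x) (p v) \<le> real 0 * d}" by simp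
next
  case (Suc k)
  define A where "A = {v\<in>C. dist (p x) (p v) \<le> real k * d}"
  define B where "B = {v\<in>C. dist (p x) (p v) \<le> real (Suc k) * d}"
  have finC: "finite C" using fin unfolding C_def component_def by simp
  have xC: "x \<in> C" using xV unfolding C_def component_def by simp
  have kk: "real k * d \<le> real (Suc k) * d" using dnn by (intro mult_right_mono) auto
  have AB: "A \<subseteq> B" unfolding A_def B_def using kk by auto
  have BC: "B \<subseteq> C" unfolding B_def by auto
  have IH': "min (k+1) (card C) \<le> card A" using Suc.IH unfolding A_def .
  have "min (Suc k + 1) (card C) \<le> card B"
  proof (cases "A = C")
    case True
    then have "B = C" using AB BC by auto
    then show ?thesis by simp
  next
    case False
    then obtain v where v: "v \<in> C" "v \<notin> A" unfolding A_def by auto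
    have xA: "x \<in> A" using xC dnn unfolding A_def by simp
    have "(adj V E0)\<^sup>*\<^sup>* x v" using v unfolding C_def component_def by simp
    from crossing[OF this xA v(2)] obtain a b where
      ab: "a \<in> A" "b \<notin> A" "adj V E0 a b" "(adj V E0)\<^sup>*\<^sup>* x b" by blast
    have bC: "b \<in> C" using ab unfolding C_def component_def adj_def by simp
    have "dist (p x) (p b) \<le> dist (p x) (p a) + dist (p a) (p b)" by (rule dist_triangle)
    also have "\<dots> \<le> real k * d + d" using ab(1) edge[OF ab(3)] unfolding A_def by simp
    finally have "b \<in> B" using bC unfolding B_def by (simp add: algebra_simps)
    then have "A \<subset> B" using AB ab(2) by auto
    then have lt: "card A < card B" using finC BC by (meson finite_subset psubset_card_mono)
    show ?thesis using IH' lt by (simp add: min_def split: if_splits)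
  qed
  then show ?case unfolding B_def .
qed

theorem lemma2p1:
  fixes V :: "'v set" and E :: "'v set set" and p :: "'v \<Rightarrow> real^'d"
    and \<alpha> :: real and n :: nat
  assumes "finite V" and "card V = n"
    and "quasi_unit_ball_graph \<alpha> V E p"
  defines "E0 \<equiv> {e \<in> E. \<forall>u v. e = {u, v} \<longrightarrow> dist (p u) (p v) \<le> \<alpha> / real n}"
  shows "\<forall>u\<in>V. is_clique E (component V E0 u)"
proof
  fix u assume uV: "u \<in> V"
  have qa: "0 < \<alpha>"
    and close: "\<forall>u\<in>V. \<forall>v\<in>V. u \<noteq> v \<longrightarrow> dist (p u) (p v) \<le> \<alpha> \<longrightarrow> {u, v} \<in> E"
    using assms(3) unfolding quasi_unit_ball_graph_def by blast+
  have npos: "n \<ge> 1" using uV assms(1,2) by (metis One_nat_def Suc_leI card_gt_0_iff empty_iff)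
  have edge: "dist (p a) (p b) \<le> \<alpha> / real n" if "adj V E0 a b" for a b
    using that unfolding adj_def E0_def by blast
  have dnn: "\<alpha> / real n \<ge> 0" using qa by simp
  show "is_clique E (component V E0 u)"
    unfolding is_clique_def
  proof (intro ballI impI)
    fix x y assume x: "x \<in> component V E0 u" and y: "y \<in> component V E0 u" and xy: "x \<noteq> y"
    have xV: "x \<in> V" and yV: "y \<in> V" using x y unfolding component_def by auto
    have ux: "(adj V E0)\<^sup>*\<^sup>* u x" and uy: "(adj V E0)\<^sup>*\<^sup>* u y" using x y unfolding component_def by auto
    have eqv: "(adj V E0)\<^sup>*\<^sup>* x v = (adj V E0)\<^sup>*\<^sup>* u v" for v
      using ux rt_sym[OF ux] by (meson rtranclp_trans)
    have Ceq: "component V E0 x = component V E0 u"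
      unfolding component_def using eqv by simp
    define C where "C = component V E0 x"
    have CV: "C \<subseteq> V" unfolding C_def component_def by auto
    have cardC: "card C \<le> n" using card_mono[OF assms(1) CV] assms(2) by simp
    have mb: "min ((n-1)+1) (card C) \<le> card {v\<in>C. dist (p x) (p v) \<le> real (n-1) * (\<alpha> / real n)}"
      using main_bound[of V x E0 p "\<alpha> / real n" "n-1"] assms(1) xV edge dnn unfolding C_def by blast
    have finC: "finite C" using CV assms(1) finite_subset by blast
    have "card C \<le> card {v\<in>C. dist (p x) (p v) \<le> real (n-1) * (\<alpha> / real n)}"
      using mb cardC npos by simp
    then have "{v\<in>C. dist (p x) (p v) \<le> real (n-1) * (\<alpha> / real n)} = C"
      using finC by (metis (no_types, lifting) card_seteq mem_Collect_eq subsetI)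
    moreover have "y \<in> C" using y Ceq C_def by simp
    ultimately have d1: "dist (p x) (p y) \<le> real (n-1) * (\<alpha> / real n)" by blast
    have "real (n-1) * (\<alpha> / real n) \<le> real n * (\<alpha> / real n)"
      using dnn by (intro mult_right_mono) auto
    also have "\<dots> = \<alpha>" using npos by simp
    finally have "dist (p x) (p y) \<le> \<alpha>" using d1 by linarith
    then show "{x, y} \<in> E" using close xV yV xy by blast
  qed
qed

end
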